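(* Suppose $\psi\in\mathbb L^2(\mathbb S^1)$ and Assumption (A) holds: there is $\sigma_0>0$ with $\sigma(x)\ge\sigma_0$ for all $x\in\mathbb S^1$. Let $E^c=\{\omega\in\Omega:\exists x\in[0,2\pi),\ \hat\sigma(x)<\sigma_0/2\}$. Then for $m\in\mathcal M_n$, \[\mathbb E\big(\|\hat\psi_m-\psi\|_2^2\mathbb 1_{E^c}\big)\le(n\Phi_0^2+\|\psi\|_2^2)\,12\,e^{-2n\sigma_0^2/36}.\]
   Context: Identify $\mathbb S^1$ with $[0,2\pi)$ with its order and anticlockwise orientation; the arc $[x,y]$ is the usual interval if $x\le y$ and $[x,2\pi)\cup[0,y]$ if $x>y$. $\mathbb L^2(\mathbb S^1)$ carries $\langle g,h\rangle=\int gh$, norm $\|\cdot\|_2$. On a probability space $(\Omega,\mathcal F,\mathbb P)$, let $(X,L,U)$ be $\mathbb S^1$-valued, $X$ independent of $(L,U)$, $X$ with density $f$, $L\ne U$ a.s.; $(X_i,L_i,U_i)_{i\le n}$ i.i.d. copies. $\Delta_i=\mathbb 1_{\{X_i\in[L_i,U_i]\}}$, $X_i'=X_i$ if $\Delta_i=1$ and $-\pi$ otherwise. $\sigma(x)=\mathbb P(x\in[L,U])$, $\psi=f\sigma$, $\hat\sigma(x)=\frac1n\sum_i\mathbb 1_{\{x\in[L_i,U_i]\}}$. Linear sieves: finite-dimensional subspaces $(S_m)_{m\in\mathcal M_n}$ of $\mathbb L^2(\mathbb S^1)$, $\dim S_m=D_m\le n$, with $\Phi_0>0$ such that $\|t\|_\infty\le\Phi_0\sqrt{D_m}\|t\|_2$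 for $t\in S_m$ (equivalently $\|\sum_{\lambda\in\Lambda_m}\varphi_\lambda^2\|_\infty\le\Phi_0^2D_m$ for an orthonormal basis $(\varphi_\lambda)_{\lambda\in\Lambda_m}$). $\hat\psi_m=\sum_{\lambda\in\Lambda_m}\big(\frac1n\sum_i\Delta_i\varphi_\lambda(X_i')\big)\varphi_\lambda$. *)

theory Defs
  imports "HOL-Probability.Probability"
begin

text \<open>The circle S^1 is identified with [0, 2 pi).\<close>
definition S1 :: "real set" where
  "S1 = {0..<2*pi}"

text \<open>The arc [x,y] with the anticlockwise orientation.\<close>
definition arc :: "real \<Rightarrow> real \<Rightarrow> real set" where
  "arc x y = (if x \<le> y then {x..y} else {x..<2*pi} \<union> {0..y})"

definition L2sq :: "(real \<Rightarrow> real) \<Rightarrow> ennreal" where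
  "L2sq g = (\<integral>\<^sup>+ x \<in> S1. ennreal ((g x)\<^sup>2) \<partial>lborel)"

definition in_L2 :: "(real \<Rightarrow> real) \<Rightarrow> bool" where
  "in_L2 g \<longleftrightarrow> (\<lambda>x. g x * indicator S1 x) \<in> borel_measurable lborel \<and> L2sq g < \<infinity>"

definition cover_prob :: "'a measure \<Rightarrow> ('a \<Rightarrow> real) \<Rightarrow> ('a \<Rightarrow> real) \<Rightarrow> real \<Rightarrow> real" where
  "cover_prob M L U x = measure M {\<omega> \<in> space M. x \<in> arc (L \<omega>) (U \<omega>)}"

definition sigma_hat :: "nat \<Rightarrow> (nat \<Rightarrow> 'a \<Rightarrow> real) \<Rightarrow> (nat \<Rightarrow> 'a \<Rightarrow> real) \<Rightarrow> real \<Rightarrow> 'a \<Rightarrow> real" where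
  "sigma_hat n Ls Us x \<omega> = (1 / real n) * (\<Sum>i<n. indicator (arc (Ls i \<omega>) (Us i \<omega>)) x)"

definition Delta :: "(nat \<Rightarrow> 'a \<Rightarrow> real) \<Rightarrow> (nat \<Rightarrow> 'a \<Rightarrow> real) \<Rightarrow> (nat \<Rightarrow> 'a \<Rightarrow> real) \<Rightarrow> nat \<Rightarrow> 'a \<Rightarrow> real" where
  "Delta Xs Ls Us i \<omega> = indicator (arc (Ls i \<omega>) (Us i \<omega>)) (Xs i \<omega>)"

definition Xprime :: "(nat \<Rightarrow> 'a \<Rightarrow> real) \<Rightarrow> (nat \<Rightarrow> 'a \<Rightarrow> real) \<Rightarrow> (nat \<Rightarrow> 'a \<Rightarrow> real) \<Rightarrow> nat \<Rightarrow> 'a \<Rightarrow> real" where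
  "Xprime Xs Ls Us i \<omega> = (if Xs i \<omega> \<in> arc (Ls i \<omega>) (Us i \<omega>) then Xs i \<omega> else - pi)"

definition psi_hat :: "nat \<Rightarrow> 'l set \<Rightarrow> ('l \<Rightarrow> real \<Rightarrow> real) \<Rightarrow> (nat \<Rightarrow> 'a \<Rightarrow> real) \<Rightarrow>
    (nat \<Rightarrow> 'a \<Rightarrow> real) \<Rightarrow> (nat \<Rightarrow> 'a \<Rightarrow> real) \<Rightarrow> 'a \<Rightarrow> real \<Rightarrow> real" where
  "psi_hat n \<Lambda> \<phi> Xs Ls Us \<omega> x =
     (\<Sum>l\<in>\<Lambda>. ((1 / real n) * (\<Sum>i<n. Delta Xs Ls Us i \<omega> * \<phi> l (Xprime Xs Ls Us i \<omega>))) * \<phi> l x)"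

end

theory Submission
  imports Defs
begin

lemma one_minus_le_exp_quad:
  fixes x :: real assumes "0 \<le> x" "x < 1"
  shows "1 - x \<le> exp (- x - x\<^sup>2 / 2)"
proof -
  define h where "h t = - t - t\<^sup>2/2 - ln (1 - t)" for t :: real
  have "h 0 \<le> h x"
  proof (rule DERIV_nonneg_imp_nondecreasing[OF assms(1)])
    fix t assume t: "0 \<le> t" "t \<le> x"
    hence t1: "t < 1" using assms by linarith
    have "DERIV h t :> (- 1 - t + 1 / (1 - t))"
      unfolding h_def using t1
      by (auto intro!: derivative_eq_intros simp: power2_eq_square field_simps)
    moreover have "- 1 - t + 1 / (1 - t) \<ge> 0"
    proof -
      have "- 1 - t + 1 / (1 - t) = t\<^sup>2 / (1 - t)" using t1 by (simp add: field_simps power2_eq_square)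
      thus ?thesis using t1 by simp
    qed
    ultimately show "\<exists>y. DERIV h t :> y \<and> 0 \<le> y" by blast
  qed
  hence "ln (1 - x) \<le> - x - x\<^sup>2/2" by (simp add: h_def)
  hence "exp (ln (1 - x)) \<le> exp (- x - x\<^sup>2 / 2)" by simp
  thus ?thesis using assms by simp
qed

lemma final_numeric:
  fixes s K :: real and n :: nat
  assumes s: "0 < s" "s \<le> 1" and w6: "6 < exp (real n * s\<^sup>2 / 18)"
    and K: "0 \<le> K" "K \<le> 20 / s"
  shows "(2 * K + 1) * ((1 - (s - s / 10) / 2) ^ n * exp (ln 2 * (real n * s / 2)))
         \<le> 6 * exp (- 2 * real n * s\<^sup>2 / 36)"
proof -
  define x where "x = 9 * s / 20"
  have x: "0 \<le> x" "x < 1" using s by (auto simp: x_def)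
  have eqx: "1 - (s - s / 10) / 2 = 1 - x" by (simp add: x_def field_simps)
  have p1: "(1 - x) ^ n \<le> exp (real n * (- x - x\<^sup>2 / 2))"
  proof -
    have "(1 - x) ^ n \<le> exp (- x - x\<^sup>2 / 2) ^ n"
      using one_minus_le_exp_quad[OF x] x by (intro power_mono) auto
    also have "\<dots> = exp (real n * (- x - x\<^sup>2 / 2))" by (simp add: exp_of_nat_mult)
    finally show ?thesis .
  qed
  have ln2: "ln (2::real) \<le> 3 / 4"
  proof -
    have "2 \<le> 1 + 3/4 + (3/4::real)\<^sup>2 / 2" by (simp add: power2_eq_square)
    also have "\<dots> \<le> exp (3/4)" by (rule exp_lower_Taylor_quadratic) simp
    finally have "ln 2 \<le> ln (exp (3/4::real))" by (subst ln_le_cancel_iff) auto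
    thus ?thesis by simp
  qed
  have e1: "exp (1::real) \<le> 3" by (rule exp_le)
  have e2: "2 \<le> exp (1::real)" using exp_ge_add_one_self[of 1] by simp
  define w where "w = real n * s\<^sup>2"
  have w27: "27 < w"
  proof -
    have "exp (3/2::real) ^ 2 = exp 1 ^ 3" by (simp flip: exp_of_nat_mult)
    also have "\<dots> \<le> 3 ^ 3" using e1 by (intro power_mono) auto
    finally have "exp (3/2::real) ^ 2 < 6 ^ 2" by simp
    hence "exp (3/2::real) < 6" by (rule power_less_imp_less_base) simp
    hence "exp (3/2::real) < exp (w / 18)" using w6 unfolding w_def by linarith
    hence "3/2 < w / 18" by simp
    thus ?thesis by simp
  qed
  define y where "y = 1 / s"
  have y1: "1 \<le> y" using s by (simp add: y_def)
  have nsy: "real n * s = w * y" using s by (simp add: w_def y_def power2_eq_square)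
  have "(2 * K + 1) * ((1 - (s - s / 10) / 2) ^ n * exp (ln 2 * (real n * s / 2)))
     \<le> (40 * y + 1) * (exp (real n * (- x - x\<^sup>2 / 2)) * exp (3/8 * (real n * s)))"
  proof (rule mult_mono)
    show "2 * K + 1 \<le> 40 * y + 1" using K by (simp add: y_def)
    show "(1 - (s - s / 10) / 2) ^ n * exp (ln 2 * (real n * s / 2))
        \<le> exp (real n * (- x - x\<^sup>2 / 2)) * exp (3 / 8 * (real n * s))"
    proof (rule mult_mono)
      show "(1 - (s - s / 10) / 2) ^ n \<le> exp (real n * (- x - x\<^sup>2 / 2))" using p1 eqx by simp
      show "exp (ln 2 * (real n * s / 2)) \<le> exp (3 / 8 * (real n * s))"
      proof -
        have "ln 2 * (real n * s / 2) \<le> (3/4) * (real n * s / 2)"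
          using ln2 s by (intro mult_right_mono) auto
        thus ?thesis by simp
      qed
    qed (use x in auto)
  qed (use y1 x eqx in \<open>auto simp: x_def\<close>)
  also have "\<dots> = (40 * y + 1) * exp (- (3/40) * (w * y) - (81/800) * w)"
  proof -
    have "real n * (- x - x\<^sup>2 / 2) + 3/8 * (real n * s) = - (3/40) * (w * y) - (81/800) * w"
      unfolding nsy[symmetric] by (simp add: x_def w_def power2_eq_square field_simps)
    thus ?thesis by (simp add: mult_exp_exp)
  qed
  also have "\<dots> \<le> (40 * y + 1) * exp (- 2 * y - 1 - w / 18)"
  proof -
    have "- (3/40) * (w * y) \<le> - (3/40) * (27 * y)" using w27 y1 by (intro mult_left_mono_neg mult_right_mono) auto
    hence "- (3/40) * (w * y) - (81/800) * w \<le> - 2 * y - 1 - w / 18" using w27 y1 by linarith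
    thus ?thesis using y1 by (intro mult_left_mono) auto
  qed
  also have "\<dots> = ((40 * y + 1) * exp (- 2 * y)) * exp (-1) * exp (- w / 18)"
  proof -
    have "exp (- 2 * y - 1 - w / 18) = exp (- 2 * y) * exp (-1) * exp (- w / 18)"
      by (simp add: mult_exp_exp)
    thus ?thesis by simp
  qed
  also have "\<dots> \<le> (41 * exp (-2)) * exp (-1) * exp (- w / 18)"
  proof -
    have "y \<le> exp (2 * y - 2)" using exp_ge_add_one_self[of "2*y-2"] y1 by linarith
    hence "y * exp (-2 * y) \<le> exp (2 * y - 2) * exp (-2 * y)" by (intro mult_right_mono) auto
    also have "\<dots> = exp (-2)" by (simp add: mult_exp_exp)
    finally have a: "y * exp (-2 * y) \<le> exp (-2)" .
    have b: "exp (- 2 * y) \<le> y * exp (-2 * y)" using y1 by simp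
    have "(40 * y + 1) * exp (- 2 * y) = 40 * (y * exp (-2 * y)) + exp (-2 * y)" by (simp add: algebra_simps)
    also have "\<dots> \<le> 41 * exp (-2)" using a b by linarith
    finally show ?thesis by (intro mult_right_mono) auto
  qed
  also have "\<dots> = 41 * exp (-3) * exp (- w / 18)" by (simp add: mult_exp_exp)
  also have "\<dots> \<le> 6 * exp (- w / 18)"
  proof -
    have "exp (1::real) ^ 3 \<ge> 2 ^ 3" using e2 by (intro power_mono) auto
    hence "exp (3::real) \<ge> 8" by (simp flip: exp_of_nat_mult)
    hence "41 * exp (-3::real) \<le> 6" by (simp add: exp_minus field_simps)
    thus ?thesis by (intro mult_right_mono) auto
  qed
  also have "\<dots> = 6 * exp (- 2 * real n * s\<^sup>2 / 36)" by (simp add: w_def)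
  finally show ?thesis .
qed

lemma (in prob_space) chernoff_event:
  fixes T :: "nat \<Rightarrow> 'a \<Rightarrow> real \<times> real \<times> real" and T0 :: "'a \<Rightarrow> real \<times> real \<times> real"
  assumes indep: "indep_vars (\<lambda>_. borel) T {..<n}"
    and dist: "\<forall>i<n. distr M borel (T i) = distr M borel T0"
    and T0m: "T0 \<in> borel_measurable M"
    and B: "B \<in> sets (borel :: (real \<times> real \<times> real) measure)"
    and q: "q0 \<le> prob {\<omega>\<in>space M. T0 \<omega> \<in> B}"
  shows "prob {\<omega>\<in>space M. (\<Sum>i<n. indicator B (T i \<omega>)) < c} \<le> (1 - q0/2)^n * exp (ln 2 * c)"
proof -
  have Tm[measurable]: "T i \<in> borel_measurable M" if "i < n" for i
    using indep that unfolding indep_vars_def by auto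
  note [measurable] = T0m B
  define h :: "real \<times> real \<times> real \<Rightarrow> real" where "h p = 1 - indicator B p / 2" for p
  have hm[measurable]: "h \<in> borel_measurable borel" unfolding h_def by measurable
  have h_exp: "h p = exp (- ln 2 * indicator B p)" for p
    by (cases "p \<in> B") (auto simp: h_def exp_minus)
  have hb: "0 \<le> h p" "h p \<le> 1" for p by (cases "p \<in> B"; simp add: h_def)+
  define Z where "Z \<omega> = (\<Prod>i<n. h (T i \<omega>))" for \<omega>
  have Z_exp: "Z \<omega> = exp (- ln 2 * (\<Sum>i<n. indicator B (T i \<omega>)))" for \<omega>
    unfolding Z_def h_exp by (simp add: exp_sum sum_distrib_left)
  have indh: "indep_vars (\<lambda>_. borel) (\<lambda>i \<omega>. h (T i \<omega>)) {..<n}"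
    by (rule indep_vars_compose2[OF indep]) simp
  have inth: "integrable M (\<lambda>\<omega>. h (T i \<omega>))" if "i < n" for i
    using that hb by (intro integrable_const_bound[where B=1]) auto
  have EZ: "expectation Z = (\<Prod>i<n. expectation (\<lambda>\<omega>. h (T i \<omega>)))"
    unfolding Z_def by (rule indep_vars_lebesgue_integral[OF _ indh inth]) auto
  have intZ: "integrable M Z"
    unfolding Z_def by (rule indep_vars_integrable[OF _ indh inth]) auto
  have Eh0: "expectation (\<lambda>\<omega>. h (T0 \<omega>)) = 1 - prob {\<omega>\<in>space M. T0 \<omega> \<in> B} / 2"
  proof -
    have "expectation (\<lambda>\<omega>. h (T0 \<omega>)) = expectation (\<lambda>\<omega>. 1 - indicator {\<omega>\<in>space M. T0 \<omega> \<in> B} \<omega> / 2)"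
      by (intro Bochner_Integration.integral_cong) (auto simp: h_def indicator_def)
    also have "\<dots> = 1 - prob {\<omega>\<in>space M. T0 \<omega> \<in> B} / 2"
    proof -
      have S: "{\<omega>\<in>space M. T0 \<omega> \<in> B} \<in> sets M" by measurable
      have "integrable M (\<lambda>\<omega>. indicator {\<omega>\<in>space M. T0 \<omega> \<in> B} \<omega> / 2 :: real)"
        by (intro integrable_divide_zero integrable_real_indicator S) (simp add: less_top[symmetric])
      thus ?thesis by (subst Bochner_Integration.integral_diff) (auto simp: prob_space S)
    qed
    finally show ?thesis .
  qed
  have Eh: "expectation (\<lambda>\<omega>. h (T i \<omega>)) \<le> 1 - q0 / 2" if "i < n" for i
  proof -
    have "expectation (\<lambda>\<omega>. h (T i \<omega>)) = integral\<^sup>L (distr M borel (T i)) h"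
      using that by (subst integral_distr) auto
    also have "\<dots> = integral\<^sup>L (distr M borel T0) h" using dist that by simp
    also have "\<dots> = expectation (\<lambda>\<omega>. h (T0 \<omega>))" by (subst integral_distr) auto
    finally show ?thesis using Eh0 q by simp
  qed
  have EZ_le: "expectation Z \<le> (1 - q0/2)^n"
  proof -
    have "(\<Prod>i<n. expectation (\<lambda>\<omega>. h (T i \<omega>))) \<le> (\<Prod>i<n. (1 - q0/2))"
      by (intro prod_mono conjI Eh Bochner_Integration.integral_nonneg) (auto simp: hb)
    thus ?thesis using EZ by simp
  qed
  have Zm[measurable]: "Z \<in> borel_measurable M" unfolding Z_def by measurable
  have sub: "{\<omega>\<in>space M. (\<Sum>i<n. indicator B (T i \<omega>)) < c} \<subseteq> {\<omega>\<in>space M. Z \<omega> \<ge> exp (- ln 2 * c)}"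
    by (auto simp: Z_exp)
  have "prob {\<omega>\<in>space M. (\<Sum>i<n. indicator B (T i \<omega>)) < c} \<le> prob {\<omega>\<in>space M. Z \<omega> \<ge> exp (- ln 2 * c)}"
    by (rule finite_measure_mono[OF sub]) measurable
  also have "\<dots> \<le> expectation Z / exp (- ln 2 * c)"
    by (rule integral_Markov_inequality_measure[OF intZ, of "space M"]) (auto simp: Z_def hb prod_nonneg)
  also have "\<dots> \<le> (1 - q0/2)^n / exp (- ln 2 * c)"
    by (intro divide_right_mono EZ_le) simp
  also have "\<dots> = (1 - q0/2)^n * exp (ln 2 * c)" by (simp add: exp_minus field_simps)
  finally show ?thesis .
qed

lemma (in prob_space) right_lim_le:
  fixes V :: "'a \<Rightarrow> real"
  assumes [measurable]: "V \<in> borel_measurable M"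
  shows "(\<lambda>m. prob {\<omega>\<in>space M. V \<omega> \<le> y + 1 / Suc m}) \<longlonglongrightarrow> prob {\<omega>\<in>space M. V \<omega> \<le> y}"
proof -
  have "(\<lambda>m. prob {\<omega>\<in>space M. V \<omega> \<le> y + 1 / Suc m}) \<longlonglongrightarrow> prob (\<Inter>m. {\<omega>\<in>space M. V \<omega> \<le> y + 1 / Suc m})"
  proof (rule finite_Lim_measure_decseq)
    show "range (\<lambda>m. {\<omega>\<in>space M. V \<omega> \<le> y + 1 / Suc m}) \<subseteq> sets M" by auto
    show "decseq (\<lambda>m. {\<omega>\<in>space M. V \<omega> \<le> y + 1 / Suc m})"
    proof (rule decseq_SucI)
      fix m :: nat
      have "1 / real (Suc (Suc m)) \<le> 1 / Suc m" by (intro divide_left_mono) auto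
      thus "{\<omega>\<in>space M. V \<omega> \<le> y + 1 / Suc (Suc m)} \<subseteq> {\<omega>\<in>space M. V \<omega> \<le> y + 1 / Suc m}" by auto
    qed
  qed
  also have "(\<Inter>m. {\<omega>\<in>space M. V \<omega> \<le> y + 1 / Suc m}) = {\<omega>\<in>space M. V \<omega> \<le> y}"
  proof (intro equalityI subsetI)
    fix \<omega> assume "\<omega> \<in> (\<Inter>m. {\<omega>\<in>space M. V \<omega> \<le> y + 1 / Suc m})"
    hence all: "\<And>m. V \<omega> \<le> y + 1 / Suc m" and sp: "\<omega> \<in> space M" by auto
    have "V \<omega> \<le> y"
    proof (rule ccontr)
      assume "\<not> V \<omega> \<le> y"
      then obtain m where "inverse (real (Suc m)) < V \<omega> - y"
        using reals_Archimedean[of "V \<omega> - y"] by auto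
      with all[of m] show False by (simp add: field_simps)
    qed
    thus "\<omega> \<in> {\<omega>\<in>space M. V \<omega> \<le> y}" using sp by auto
  next
    fix \<omega> assume "\<omega> \<in> {\<omega>\<in>space M. V \<omega> \<le> y}"
    moreover have "\<And>m. 0 \<le> 1 / real (Suc m)" by simp
    ultimately show "\<omega> \<in> (\<Inter>m. {\<omega>\<in>space M. V \<omega> \<le> y + 1 / Suc m})"
      by (auto intro: add_increasing2)
  qed
  finally show ?thesis .
qed

lemma (in prob_space) left_lim_open:
  fixes V :: "'a \<Rightarrow> real"
  assumes [measurable]: "V \<in> borel_measurable M"
  shows "(\<lambda>m. prob {\<omega>\<in>space M. a < V \<omega> \<and> V \<omega> \<le> b - 1 / Suc m}) \<longlonglongrightarrow> prob {\<omega>\<in>space M. a < V \<omega> \<and> V \<omega> < b}"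
proof -
  have "(\<lambda>m. prob {\<omega>\<in>space M. a < V \<omega> \<and> V \<omega> \<le> b - 1 / Suc m}) \<longlonglongrightarrow> prob (\<Union>m. {\<omega>\<in>space M. a < V \<omega> \<and> V \<omega> \<le> b - 1 / Suc m})"
  proof (rule finite_Lim_measure_incseq)
    show "range (\<lambda>m. {\<omega>\<in>space M. a < V \<omega> \<and> V \<omega> \<le> b - 1 / Suc m}) \<subseteq> sets M" by auto
    show "incseq (\<lambda>m. {\<omega>\<in>space M. a < V \<omega> \<and> V \<omega> \<le> b - 1 / Suc m})"
    proof (rule incseq_SucI)
      fix m :: nat
      have "1 / real (Suc (Suc m)) \<le> 1 / Suc m" by (intro divide_left_mono) auto
      thus "{\<omega>\<in>space M. a < V \<omega> \<and> V \<omega> \<le> b - 1 / Suc m} \<subseteq> {\<omega>\<in>space M. a < V \<omega> \<and> V \<omega> \<le> b - 1 / Suc (Suc m)}" by auto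
    qed
  qed
  also have "(\<Union>m. {\<omega>\<in>space M. a < V \<omega> \<and> V \<omega> \<le> b - 1 / Suc m}) = {\<omega>\<in>space M. a < V \<omega> \<and> V \<omega> < b}"
  proof (intro equalityI subsetI)
    fix \<omega> assume "\<omega> \<in> {\<omega>\<in>space M. a < V \<omega> \<and> V \<omega> < b}"
    hence sp: "\<omega> \<in> space M" "a < V \<omega>" "V \<omega> < b" by auto
    then obtain m where "inverse (real (Suc m)) < b - V \<omega>"
      using reals_Archimedean[of "b - V \<omega>"] by auto
    thus "\<omega> \<in> (\<Union>m. {\<omega>\<in>space M. a < V \<omega> \<and> V \<omega> \<le> b - 1 / Suc m})"
      using sp by (auto simp: field_simps intro!: exI[of _ m])
  next
    fix \<omega> assume "\<omega> \<in> (\<Union>m. {\<omega>\<in>space M. a < V \<omega> \<and> V \<omega> \<le> b - 1 / Suc m})"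
    then obtain m where "\<omega> \<in> space M" "a < V \<omega>" "V \<omega> \<le> b - 1 / Suc m" by auto
    moreover have "0 < 1 / real (Suc m)" by simp
    ultimately have "V \<omega> < b" by linarith
    thus "\<omega> \<in> {\<omega>\<in>space M. a < V \<omega> \<and> V \<omega> < b}" using \<open>\<omega> \<in> space M\<close> \<open>a < V \<omega>\<close> by auto
  qed
  finally show ?thesis .
qed

locale LUsetup = prob_space +
  fixes L U :: "'a \<Rightarrow> real"
  assumes Lm[measurable]: "L \<in> borel_measurable M" and Um[measurable]: "U \<in> borel_measurable M"
    and rngLU: "\<forall>\<omega>\<in>space M. L \<omega> \<in> S1 \<and> U \<omega> \<in> S1"
begin

definition G :: "real \<Rightarrow> real" where
  "G y = prob {\<omega>\<in>space M. L \<omega> \<le> y} + prob {\<omega>\<in>space M. U \<omega> \<le> y}"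

definition Q :: "real \<Rightarrow> real" where
  "Q c = Inf {y. c \<le> G y}"

lemma G_mono: "y \<le> z \<Longrightarrow> G y \<le> G z"
  unfolding G_def by (intro add_mono finite_measure_mono) auto

lemma G_nonneg: "0 \<le> G y" unfolding G_def by simp

lemma G_le2: "G y \<le> 2" unfolding G_def using prob_le_1 by (smt (verit))

lemma G_neg: "y < 0 \<Longrightarrow> G y = 0"
proof -
  assume "y < 0"
  hence e: "{\<omega>\<in>space M. L \<omega> \<le> y} = {}" "{\<omega>\<in>space M. U \<omega> \<le> y} = {}"
    using rngLU by (auto simp: S1_def)
  show ?thesis unfolding G_def by (simp only: e measure_empty)
qed

lemma G_2pi: "G (2 * pi) = 2"
proof -
  have "{\<omega>\<in>space M. L \<omega> \<le> 2 * pi} = space M" "{\<omega>\<in>space M. U \<omega> \<le> 2 * pi} = space M"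
    using rngLU by (auto simp: S1_def less_imp_le)
  thus ?thesis unfolding G_def by (simp add: prob_space)
qed

lemma S_bdd: "0 < c \<Longrightarrow> bdd_below {y. c \<le> G y}"
  by (rule bdd_belowI[of _ 0]) (metis G_neg linorder_not_le mem_Collect_eq)

lemma Q_le: "0 < c \<Longrightarrow> c \<le> G x \<Longrightarrow> Q x' \<le> x \<Longrightarrow> Q x' \<le> x" by simp

lemma Q_lower: "0 < c \<Longrightarrow> c \<le> G x \<Longrightarrow> Q c \<le> x"
  unfolding Q_def by (rule cInf_lower) (auto intro: S_bdd)

lemma Q_nonneg: "0 < c \<Longrightarrow> c \<le> 2 \<Longrightarrow> 0 \<le> Q c"
  unfolding Q_def
proof (rule cInf_greatest)
  assume "c \<le> 2" then show "{y. c \<le> G y} \<noteq> {}" using G_2pi by (auto intro!: exI[of _ "2*pi"])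
next
  fix y assume "0 < c" "y \<in> {y. c \<le> G y}" thus "0 \<le> y" using G_neg by (metis linorder_not_le mem_Collect_eq)
qed

lemma G_below: "0 < c \<Longrightarrow> y < Q c \<Longrightarrow> G y < c"
  using Q_lower by (meson linorder_not_le)

lemma G_Q: assumes c: "0 < c" "c \<le> 2" shows "c \<le> G (Q c)"
proof -
  have ne: "{y. c \<le> G y} \<noteq> {}" using G_2pi c by (auto intro!: exI[of _ "2*pi"])
  have lim: "(\<lambda>m. G (Q c + 1 / Suc m)) \<longlonglongrightarrow> G (Q c)"
    unfolding G_def by (intro tendsto_add right_lim_le) auto
  have "c \<le> G (Q c + 1 / Suc m)" for m
  proof -
    have "Inf {y. c \<le> G y} < Q c + 1 / Suc m" by (simp add: Q_def)
    then obtain y where y: "y \<in> {y. c \<le> G y}" "y < Q c + 1 / Suc m"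
      using cInf_less_iff[OF ne S_bdd[OF c(1)]] by auto
    thus ?thesis using G_mono[of y "Q c + 1 / Suc m"] by auto
  qed
  thus ?thesis using lim by (intro LIMSEQ_le_const[OF lim]) auto
qed

lemma G_mass:
  assumes ab: "a < b" and d: "\<And>y. a < y \<Longrightarrow> y < b \<Longrightarrow> G y \<le> G a + d"
  shows "prob {\<omega>\<in>space M. a < L \<omega> \<and> L \<omega> < b} + prob {\<omega>\<in>space M. a < U \<omega> \<and> U \<omega> < b} \<le> d"
proof -
  have d0: "0 \<le> d" using d[of "(a+b)/2"] ab G_mono[of a "(a+b)/2"] by auto
  have lim: "(\<lambda>m. prob {\<omega>\<in>space M. a < L \<omega> \<and> L \<omega> \<le> b - 1 / Suc m} + prob {\<omega>\<in>space M. a < U \<omega> \<and> U \<omega> \<le> b - 1 / Suc m})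
      \<longlonglongrightarrow> prob {\<omega>\<in>space M. a < L \<omega> \<and> L \<omega> < b} + prob {\<omega>\<in>space M. a < U \<omega> \<and> U \<omega> < b}"
    by (intro tendsto_add left_lim_open) auto
  have diff: "prob {\<omega>\<in>space M. a < V \<omega> \<and> V \<omega> \<le> z} = prob {\<omega>\<in>space M. V \<omega> \<le> z} - prob {\<omega>\<in>space M. V \<omega> \<le> a}"
    if "a \<le> z" "V \<in> borel_measurable M" for V z
  proof -
    have "{\<omega>\<in>space M. a < V \<omega> \<and> V \<omega> \<le> z} = {\<omega>\<in>space M. V \<omega> \<le> z} - {\<omega>\<in>space M. V \<omega> \<le> a}" by auto
    moreover have "prob ({\<omega>\<in>space M. V \<omega> \<le> z} - {\<omega>\<in>space M. V \<omega> \<le> a}) = prob {\<omega>\<in>space M. V \<omega> \<le> z} - prob {\<omega>\<in>space M. V \<omega> \<le> a}"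
      using that by (intro finite_measure_Diff) auto
    ultimately show ?thesis by simp
  qed
  have "prob {\<omega>\<in>space M. a < L \<omega> \<and> L \<omega> \<le> b - 1 / Suc m} + prob {\<omega>\<in>space M. a < U \<omega> \<and> U \<omega> \<le> b - 1 / Suc m} \<le> d" for m
  proof (cases "a < b - 1 / Suc m")
    case True
    have "prob {\<omega>\<in>space M. a < L \<omega> \<and> L \<omega> \<le> b - 1 / Suc m} + prob {\<omega>\<in>space M. a < U \<omega> \<and> U \<omega> \<le> b - 1 / Suc m}
        = G (b - 1 / Suc m) - G a" using True by (simp add: diff G_def)
    also have "\<dots> \<le> d" using d[of "b - 1 / Suc m"] True by simp
    finally show ?thesis .
  next
    case False
    hence e: "{\<omega>\<in>space M. a < L \<omega> \<and> L \<omega> \<le> b - 1 / Suc m} = {}" "{\<omega>\<in>space M. a < U \<omega> \<and> U \<omega> \<le> b - 1 / Suc m} = {}" by auto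
    show ?thesis using d0 by (simp only: e measure_empty)
  qed
  thus ?thesis by (intro LIMSEQ_le_const2[OF lim]) auto
qed

end

lemma arc_iff: "x \<in> arc l u \<longleftrightarrow> (l \<le> u \<and> l \<le> x \<and> x \<le> u) \<or> (u < l \<and> ((l \<le> x \<and> x < 2*pi) \<or> (0 \<le> x \<and> x \<le> u)))"
  by (auto simp: arc_def)

definition ptset :: "real \<Rightarrow> (real \<times> real) set" where
  "ptset g = {p. g \<in> arc (fst p) (snd p)}"

definition cellset :: "real \<Rightarrow> real \<Rightarrow> (real \<times> real) set" where
  "cellset a b = {p. (fst p \<le> snd p \<and> fst p \<le> a \<and> b \<le> snd p) \<or> (snd p < fst p \<and> (fst p \<le> a \<or> b \<le> snd p))}"

lemma ptset_sets[measurable]: "ptset g \<in> sets (borel :: (real \<times> real) measure)"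
proof -
  have "ptset g = {p \<in> space (borel \<Otimes>\<^sub>M borel). (fst p \<le> snd p \<and> fst p \<le> g \<and> g \<le> snd p) \<or> (snd p < fst p \<and> ((fst p \<le> g \<and> g < 2*pi) \<or> (0 \<le> g \<and> g \<le> snd p)))}"
    by (auto simp: ptset_def arc_iff space_pair_measure)
  also have "\<dots> \<in> sets (borel \<Otimes>\<^sub>M borel)" by measurable
  also have "sets (borel \<Otimes>\<^sub>M borel :: (real \<times> real) measure) = sets (borel :: (real \<times> real) measure)" by (simp only: borel_prod)
  finally show ?thesis .
qed

lemma cellset_sets[measurable]: "cellset a b \<in> sets (borel :: (real \<times> real) measure)"
proof -
  have "cellset a b = {p \<in> space (borel \<Otimes>\<^sub>M borel). (fst p \<le> snd p \<and> fst p \<le> a \<and> b \<le> snd p) \<or> (snd p < fst p \<and> (fst p \<le> a \<or> b \<le> snd p))}"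
    by (auto simp: cellset_def space_pair_measure)
  also have "\<dots> \<in> sets (borel \<Otimes>\<^sub>M borel)" by measurable
  also have "sets (borel \<Otimes>\<^sub>M borel :: (real \<times> real) measure) = sets (borel :: (real \<times> real) measure)" by (simp only: borel_prod)
  finally show ?thesis .
qed

lemma cell_sub: "x \<in> S1 \<Longrightarrow> a < x \<Longrightarrow> x < b \<Longrightarrow> p \<in> cellset a b \<Longrightarrow> x \<in> arc (fst p) (snd p)"
  unfolding cellset_def arc_iff S1_def by (cases p) auto

lemma cell_miss: "x \<in> S1 \<Longrightarrow> a < x \<Longrightarrow> x < b \<Longrightarrow> x \<in> arc l u \<Longrightarrow> (l, u) \<notin> cellset a b
   \<Longrightarrow> (a < l \<and> l < b) \<or> (a < u \<and> u < b)"
  unfolding cellset_def arc_iff S1_def by auto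

context LUsetup
begin

definition sig :: "real \<Rightarrow> real" where
  "sig x = prob {\<omega>\<in>space M. x \<in> arc (L \<omega>) (U \<omega>)}"

lemma sig_ptset: "prob {\<omega>\<in>space M. (L \<omega>, U \<omega>) \<in> ptset g} = sig g"
  by (simp add: sig_def ptset_def)

lemma cell_prob:
  assumes x: "x \<in> S1" "a < x" "x < b"
  shows "sig x \<le> prob {\<omega>\<in>space M. (L \<omega>, U \<omega>) \<in> cellset a b}
     + (prob {\<omega>\<in>space M. a < L \<omega> \<and> L \<omega> < b} + prob {\<omega>\<in>space M. a < U \<omega> \<and> U \<omega> < b})"
proof -
  have "{\<omega>\<in>space M. x \<in> arc (L \<omega>) (U \<omega>)} \<subseteq> {\<omega>\<in>space M. (L \<omega>, U \<omega>) \<in> cellset a b}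
      \<union> ({\<omega>\<in>space M. a < L \<omega> \<and> L \<omega> < b} \<union> {\<omega>\<in>space M. a < U \<omega> \<and> U \<omega> < b})"
  proof (rule subsetI)
    fix \<omega> assume "\<omega> \<in> {\<omega>\<in>space M. x \<in> arc (L \<omega>) (U \<omega>)}"
    hence sp: "\<omega> \<in> space M" and xa: "x \<in> arc (L \<omega>) (U \<omega>)" by auto
    show "\<omega> \<in> {\<omega>\<in>space M. (L \<omega>, U \<omega>) \<in> cellset a b}
      \<union> ({\<omega>\<in>space M. a < L \<omega> \<and> L \<omega> < b} \<union> {\<omega>\<in>space M. a < U \<omega> \<and> U \<omega> < b})"
    proof (cases "(L \<omega>, U \<omega>) \<in> cellset a b")
      case True thus ?thesis using sp by simp
    next
      case False
      from cell_miss[OF x xa False] show ?thesis using sp by simp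
    qed
  qed
  hence "sig x \<le> prob ({\<omega>\<in>space M. (L \<omega>, U \<omega>) \<in> cellset a b}
      \<union> ({\<omega>\<in>space M. a < L \<omega> \<and> L \<omega> < b} \<union> {\<omega>\<in>space M. a < U \<omega> \<and> U \<omega> < b}))"
    unfolding sig_def by (intro finite_measure_mono) auto
  also have "\<dots> \<le> prob {\<omega>\<in>space M. (L \<omega>, U \<omega>) \<in> cellset a b}
     + prob ({\<omega>\<in>space M. a < L \<omega> \<and> L \<omega> < b} \<union> {\<omega>\<in>space M. a < U \<omega> \<and> U \<omega> < b})"
    by (intro measure_Un_le) auto
  also have "prob ({\<omega>\<in>space M. a < L \<omega> \<and> L \<omega> < b} \<union> {\<omega>\<in>space M. a < U \<omega> \<and> U \<omega> < b})
     \<le> prob {\<omega>\<in>space M. a < L \<omega> \<and> L \<omega> < b} + prob {\<omega>\<in>space M. a < U \<omega> \<and> U \<omega> < b}"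
    by (intro measure_Un_le) auto
  finally show ?thesis by simp
qed

lemma cover:
  assumes s: "0 < s" and sig_ge: "\<forall>x\<in>S1. s \<le> sig x" and d: "0 < d"
  shows "\<exists>F. finite F \<and> card F \<le> 2 * nat \<lfloor>2 / d\<rfloor> + 1
    \<and> (\<forall>B\<in>F. B \<in> sets borel \<and> s - d \<le> prob {\<omega>\<in>space M. (L \<omega>, U \<omega>) \<in> B})
    \<and> (\<forall>x\<in>S1. \<exists>B\<in>F. \<forall>p\<in>B. x \<in> arc (fst p) (snd p))"
proof -
  define K where "K = nat \<lfloor>2 / d\<rfloor>"
  have Kd: "real k * d \<le> 2" if "k \<le> K" for k
  proof -
    have "real k \<le> real K" using that by simp
    also have "\<dots> \<le> 2 / d" unfolding K_def using d by (simp add: of_nat_nat)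
    finally show ?thesis using d by (simp add: field_simps)
  qed
  define lo where "lo k = (if k = 0 then -1 else Q (real k * d))" for k :: nat
  define hi where "hi k = (if (real k + 1) * d \<le> 2 then Q ((real k + 1) * d) else 2 * pi + 1)" for k :: nat
  define Pts where "Pts = (\<lambda>k. ptset (Q (real k * d))) ` {k\<in>{1..K}. Q (real k * d) \<in> S1}"
  define Cells where "Cells = (\<lambda>k. cellset (lo k) (hi k)) ` {k\<in>{..K}. \<exists>x\<in>S1. lo k < x \<and> x < hi k}"
  define F where "F = Pts \<union> Cells"
  have finF: "finite F" unfolding F_def Pts_def Cells_def by auto
  have cardP: "card Pts \<le> K"
  proof -
    have "card Pts \<le> card {k\<in>{1..K}. Q (real k * d) \<in> S1}" unfolding Pts_def by (rule card_image_le) auto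
    also have "\<dots> \<le> card {1..K}" by (intro card_mono) auto
    finally show ?thesis by simp
  qed
  have cardC: "card Cells \<le> K + 1"
  proof -
    have "card Cells \<le> card {k\<in>{..K}. \<exists>x\<in>S1. lo k < x \<and> x < hi k}" unfolding Cells_def by (rule card_image_le) auto
    also have "\<dots> \<le> card {..K}" by (intro card_mono) auto
    finally show ?thesis by simp
  qed
  have cardF: "card F \<le> 2 * K + 1"
    unfolding F_def using card_Un_le[of Pts Cells] cardP cardC by linarith
  have probP: "s - d \<le> prob {\<omega>\<in>space M. (L \<omega>, U \<omega>) \<in> B}" if "B \<in> Pts" for B
    using that sig_ge d unfolding Pts_def by (auto simp: sig_ptset)
  have probC: "s - d \<le> prob {\<omega>\<in>space M. (L \<omega>, U \<omega>) \<in> B}" if BC: "B \<in> Cells" for B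
  proof -
    obtain k where k0: "k \<in> {k\<in>{..K}. \<exists>x\<in>S1. lo k < x \<and> x < hi k}" and B: "B = cellset (lo k) (hi k)"
      using BC unfolding Cells_def by (rule imageE)
    from k0 have k: "k \<le> K" and "\<exists>x\<in>S1. lo k < x \<and> x < hi k" by simp_all
    then obtain x where x: "x \<in> S1" "lo k < x" "x < hi k" by blast
    have Glo: "real k * d \<le> G (lo k)"
    proof (cases "k = 0")
      case True thus ?thesis by (simp add: G_nonneg)
    next
      case False
      hence "0 < real k * d" using d by simp
      thus ?thesis using False Kd[OF k] by (simp add: lo_def G_Q)
    qed
    have Gy: "G y < (real k + 1) * d" if "y < hi k" for y
    proof (cases "(real k + 1) * d \<le> 2")
      case True
      have "0 < (real k + 1) * d" using d by (simp add: add_pos_nonneg)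
      thus ?thesis using True that by (intro G_below) (auto simp: hi_def)
    next
      case False thus ?thesis using G_le2[of y] by linarith
    qed
    have mass: "prob {\<omega>\<in>space M. lo k < L \<omega> \<and> L \<omega> < hi k} + prob {\<omega>\<in>space M. lo k < U \<omega> \<and> U \<omega> < hi k} \<le> d"
    proof (rule G_mass)
      show "lo k < hi k" using x by simp
      fix y assume "lo k < y" "y < hi k"
      thus "G y \<le> G (lo k) + d" using Gy[of y] Glo by (simp add: algebra_simps)
    qed
    have "s \<le> sig x" using sig_ge x by auto
    also have "\<dots> \<le> prob {\<omega>\<in>space M. (L \<omega>, U \<omega>) \<in> B} + d"
      using cell_prob[OF x] mass B by simp
    finally show ?thesis by simp
  qed
  have covers: "\<exists>B\<in>F. \<forall>p\<in>B. x \<in> arc (fst p) (snd p)" if x: "x \<in> S1" for x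
  proof -
    define k where "k = nat \<lfloor>G x / d\<rfloor>"
    have Gx0: "0 \<le> G x / d" using G_nonneg d by simp
    have k1: "real k * d \<le> G x"
    proof -
      have "real k \<le> G x / d" unfolding k_def using Gx0 by (simp add: of_nat_nat)
      thus ?thesis using d by (simp add: field_simps)
    qed
    have k2: "G x < (real k + 1) * d"
    proof -
      have "G x / d < real k + 1" unfolding k_def using Gx0
        by (simp add: of_nat_nat)
      thus ?thesis using d by (simp add: field_simps)
    qed
    have kK: "k \<le> K" unfolding k_def K_def
      using G_le2[of x] d by (intro nat_mono floor_mono divide_right_mono) auto
    have x01: "0 \<le> x" "x < 2 * pi" using x by (auto simp: S1_def)
    have lo_le: "lo k \<le> x"
    proof (cases "k = 0")
      case True thus ?thesis using x01 by (simp add: lo_def)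
    next
      case False
      hence "0 < real k * d" using d by simp
      thus ?thesis using False k1 by (simp add: lo_def Q_lower)
    qed
    have x_hi: "x < hi k"
    proof (cases "(real k + 1) * d \<le> 2")
      case True
      have pos: "0 < (real k + 1) * d" using d by (simp add: add_pos_nonneg)
      have "\<not> Q ((real k + 1) * d) \<le> x"
      proof
        assume "Q ((real k + 1) * d) \<le> x"
        hence "G (Q ((real k + 1) * d)) \<le> G x" by (rule G_mono)
        moreover have "(real k + 1) * d \<le> G (Q ((real k + 1) * d))" using G_Q pos True by simp
        ultimately show False using k2 by simp
      qed
      thus ?thesis using True by (simp add: hi_def)
    next
      case False thus ?thesis using x01 by (simp add: hi_def)
    qed
    show ?thesis
    proof (cases "lo k = x")
      case True
      hence k0: "k \<noteq> 0" using x01 by (cases "k = 0") (auto simp: lo_def)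
      hence "Q (real k * d) = x" using True by (simp add: lo_def)
      hence "ptset x \<in> Pts" unfolding Pts_def using k0 kK x
        by (intro image_eqI[of _ _ k]) auto
      thus ?thesis unfolding F_def by (intro bexI[of _ "ptset x"]) (auto simp: ptset_def)
    next
      case False
      hence lx: "lo k < x" using lo_le by simp
      hence "cellset (lo k) (hi k) \<in> Cells" unfolding Cells_def using kK x x_hi
        by (intro image_eqI[of _ _ k]) auto
      thus ?thesis unfolding F_def using cell_sub[OF x lx x_hi] by (intro bexI[of _ "cellset (lo k) (hi k)"]) auto
    qed
  qed
  have allB: "\<forall>B\<in>F. B \<in> sets borel \<and> s - d \<le> prob {\<omega>\<in>space M. (L \<omega>, U \<omega>) \<in> B}"
  proof
    fix B assume "B \<in> F"
    moreover have "B \<in> sets borel" if "B \<in> Pts" using that unfolding Pts_def by auto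
    moreover have "B \<in> sets borel" if "B \<in> Cells" using that unfolding Cells_def by auto
    ultimately show "B \<in> sets borel \<and> s - d \<le> prob {\<omega>\<in>space M. (L \<omega>, U \<omega>) \<in> B}"
      using probP probC unfolding F_def by blast
  qed
  show ?thesis
  proof (intro exI[of _ F] conjI)
    show "card F \<le> 2 * nat \<lfloor>2 / d\<rfloor> + 1" using cardF by (simp add: K_def)
  qed (use finF allB covers in \<open>simp_all\<close>)
qed

end

lemma S1_sets[measurable]: "S1 \<in> sets borel" by (simp add: S1_def)

lemma L2sq_alt: "L2sq g = (\<integral>\<^sup>+ x. ennreal ((g x * indicator S1 x)\<^sup>2) \<partial>lborel)"
  unfolding L2sq_def by (intro nn_integral_cong) (auto simp: indicator_def)

lemma L2sq_diff_le:
  assumes [measurable]: "(\<lambda>x. p x * indicator S1 x) \<in> borel_measurable lborel"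
    "(\<lambda>x. q x * indicator S1 x) \<in> borel_measurable lborel"
  shows "L2sq (\<lambda>x. p x - q x) \<le> 2 * L2sq p + 2 * L2sq q"
proof -
  have pt: "ennreal (((p x - q x) * indicator S1 x)\<^sup>2)
      \<le> 2 * ennreal ((p x * indicator S1 x)\<^sup>2) + 2 * ennreal ((q x * indicator S1 x)\<^sup>2)" for x
  proof -
    have "((p x - q x) * indicator S1 x)\<^sup>2 \<le> 2 * (p x * indicator S1 x)\<^sup>2 + 2 * (q x * indicator S1 x)\<^sup>2"
    proof -
      have "0 \<le> (p x * indicator S1 x + q x * indicator S1 x)\<^sup>2" by simp
      thus ?thesis by (simp add: power2_eq_square algebra_simps)
    qed
    hence "ennreal (((p x - q x) * indicator S1 x)\<^sup>2) \<le> ennreal (2 * (p x * indicator S1 x)\<^sup>2 + 2 * (q x * indicator S1 x)\<^sup>2)"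
      by (rule ennreal_leI)
    also have "\<dots> = 2 * ennreal ((p x * indicator S1 x)\<^sup>2) + 2 * ennreal ((q x * indicator S1 x)\<^sup>2)"
      by (subst ennreal_plus) (auto simp: ennreal_mult)
    finally show ?thesis .
  qed
  have "L2sq (\<lambda>x. p x - q x) \<le> (\<integral>\<^sup>+ x. 2 * ennreal ((p x * indicator S1 x)\<^sup>2) + 2 * ennreal ((q x * indicator S1 x)\<^sup>2) \<partial>lborel)"
    unfolding L2sq_alt by (intro nn_integral_mono pt)
  also have "\<dots> = 2 * L2sq p + 2 * L2sq q"
    unfolding L2sq_alt by (simp add: nn_integral_add nn_integral_cmult)
  finally show ?thesis .
qed

lemma L2sq_ortho:
  fixes \<phi> :: "'l \<Rightarrow> real \<Rightarrow> real" and a :: "'l \<Rightarrow> real"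
  assumes fin: "finite \<Lambda>"
    and basis_meas: "\<forall>l\<in>\<Lambda>. \<phi> l \<in> borel_measurable lborel"
    and basis_L2: "\<forall>l\<in>\<Lambda>. set_integrable lborel S1 (\<lambda>x. (\<phi> l x)\<^sup>2)"
    and orthonormal: "\<forall>l\<in>\<Lambda>. \<forall>k\<in>\<Lambda>. (LINT x:S1|lborel. \<phi> l x * \<phi> k x) = (if l = k then 1 else 0)"
  shows "L2sq (\<lambda>x. \<Sum>l\<in>\<Lambda>. a l * \<phi> l x) = ennreal (\<Sum>l\<in>\<Lambda>. (a l)\<^sup>2)"
proof -
  define h where "h l k x = indicator S1 x * (\<phi> l x * \<phi> k x)" for l k x
  have hm: "h l k \<in> borel_measurable lborel" if "l \<in> \<Lambda>" "k \<in> \<Lambda>" for l k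
    using basis_meas that unfolding h_def by (auto intro!: borel_measurable_times)
  have int_h: "integrable lborel (h l k)" if lk: "l \<in> \<Lambda>" "k \<in> \<Lambda>" for l k
  proof (rule Bochner_Integration.integrable_bound)
    show "integrable lborel (\<lambda>x. indicator S1 x *\<^sub>R (\<phi> l x)\<^sup>2 + indicator S1 x *\<^sub>R (\<phi> k x)\<^sup>2)"
      using basis_L2 lk unfolding set_integrable_def by (intro Bochner_Integration.integrable_add) auto
    show "h l k \<in> borel_measurable lborel" using hm lk .
    show "AE x in lborel. norm (h l k x) \<le> norm (indicator S1 x *\<^sub>R (\<phi> l x)\<^sup>2 + indicator S1 x *\<^sub>R (\<phi> k x)\<^sup>2)"
    proof (intro AE_I2)
      fix x
      have "\<bar>\<phi> l x * \<phi> k x\<bar> \<le> (\<phi> l x)\<^sup>2 + (\<phi> k x)\<^sup>2"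
      proof -
        have "0 \<le> (\<bar>\<phi> l x\<bar> - \<bar>\<phi> k x\<bar>)\<^sup>2" by simp
        hence "2 * (\<bar>\<phi> l x\<bar> * \<bar>\<phi> k x\<bar>) \<le> (\<phi> l x)\<^sup>2 + (\<phi> k x)\<^sup>2"
          by (simp add: power2_eq_square algebra_simps)
        moreover have "0 \<le> \<bar>\<phi> l x\<bar> * \<bar>\<phi> k x\<bar>" by simp
        ultimately have "\<bar>\<phi> l x\<bar> * \<bar>\<phi> k x\<bar> \<le> (\<phi> l x)\<^sup>2 + (\<phi> k x)\<^sup>2" by linarith
        thus ?thesis by (simp add: abs_mult)
      qed
      thus "norm (h l k x) \<le> norm (indicator S1 x *\<^sub>R (\<phi> l x)\<^sup>2 + indicator S1 x *\<^sub>R (\<phi> k x)\<^sup>2)"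
        by (auto simp: h_def indicator_def)
    qed
  qed
  have int_eq: "integral\<^sup>L lborel (h l k) = (if l = k then 1 else 0)" if "l \<in> \<Lambda>" "k \<in> \<Lambda>" for l k
    using orthonormal that unfolding set_lebesgue_integral_def h_def by simp
  have sq: "((\<Sum>l\<in>\<Lambda>. a l * \<phi> l x) * indicator S1 x)\<^sup>2 = (\<Sum>l\<in>\<Lambda>. \<Sum>k\<in>\<Lambda>. a l * a k * h l k x)" for x
  proof -
    have "((\<Sum>l\<in>\<Lambda>. a l * \<phi> l x) * indicator S1 x)\<^sup>2 = (\<Sum>l\<in>\<Lambda>. a l * \<phi> l x) * (\<Sum>k\<in>\<Lambda>. a k * \<phi> k x) * indicator S1 x"
      by (simp add: power2_eq_square indicator_def)
    also have "\<dots> = (\<Sum>l\<in>\<Lambda>. \<Sum>k\<in>\<Lambda>. a l * a k * h l k x)"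
      unfolding sum_product sum_distrib_right h_def by (intro sum.cong refl) (simp add: sum_distrib_left algebra_simps)
    finally show ?thesis .
  qed
  have int_sum: "integrable lborel (\<lambda>x. \<Sum>l\<in>\<Lambda>. \<Sum>k\<in>\<Lambda>. a l * a k * h l k x)"
    using int_h by (intro Bochner_Integration.integrable_sum Bochner_Integration.integrable_mult_right) auto
  have "L2sq (\<lambda>x. \<Sum>l\<in>\<Lambda>. a l * \<phi> l x) = (\<integral>\<^sup>+ x. ennreal (\<Sum>l\<in>\<Lambda>. \<Sum>k\<in>\<Lambda>. a l * a k * h l k x) \<partial>lborel)"
    unfolding L2sq_alt sq ..
  also have "\<dots> = ennreal (\<integral>x. (\<Sum>l\<in>\<Lambda>. \<Sum>k\<in>\<Lambda>. a l * a k * h l k x) \<partial>lborel)"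
    by (intro nn_integral_eq_integral int_sum AE_I2) (simp add: sq[symmetric])
  also have "(\<integral>x. (\<Sum>l\<in>\<Lambda>. \<Sum>k\<in>\<Lambda>. a l * a k * h l k x) \<partial>lborel) = (\<Sum>l\<in>\<Lambda>. \<Sum>k\<in>\<Lambda>. a l * a k * integral\<^sup>L lborel (h l k))"
    using int_h by (simp add: Bochner_Integration.integral_sum Bochner_Integration.integrable_sum)
  also have "\<dots> = (\<Sum>l\<in>\<Lambda>. \<Sum>k\<in>\<Lambda>. a l * a k * (if l = k then 1 else 0))"
    by (intro sum.cong refl) (simp add: int_eq)
  also have "\<dots> = (\<Sum>l\<in>\<Lambda>. (a l)\<^sup>2)"
    using fin by (simp add: power2_eq_square if_distrib cong: if_cong)
  finally show ?thesis .
qed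

lemma coef_bound:
  fixes c :: "nat \<Rightarrow> 'l \<Rightarrow> real"
  assumes fin: "finite \<Lambda>" and B: "0 \<le> B" and cb: "\<forall>i<n. (\<Sum>l\<in>\<Lambda>. (c i l)\<^sup>2) \<le> B"
  shows "(\<Sum>l\<in>\<Lambda>. ((1 / real n) * (\<Sum>i<n. c i l))\<^sup>2) \<le> B"
proof (cases "n = 0")
  case True thus ?thesis using B by simp
next
  case False
  hence n: "0 < real n" by simp
  have "((1 / real n) * (\<Sum>i<n. c i l))\<^sup>2 \<le> (1 / real n) * (\<Sum>i<n. (c i l)\<^sup>2)" for l
  proof -
    have "((1 / real n) * (\<Sum>i<n. c i l))\<^sup>2 = (1 / real n)\<^sup>2 * (\<Sum>i<n. c i l)\<^sup>2" by (simp add: power2_eq_square field_simps)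
    also have "\<dots> \<le> (1 / real n)\<^sup>2 * ((\<Sum>i<n. (c i l)\<^sup>2) * real n)"
      using sum_squared_le_sum_of_squares[of "\<lambda>i. c i l" "{..<n}"] by (intro mult_left_mono) auto
    also have "\<dots> = (1 / real n) * (\<Sum>i<n. (c i l)\<^sup>2)" using n by (simp add: power2_eq_square)
    finally show ?thesis .
  qed
  hence "(\<Sum>l\<in>\<Lambda>. ((1 / real n) * (\<Sum>i<n. c i l))\<^sup>2) \<le> (\<Sum>l\<in>\<Lambda>. (1 / real n) * (\<Sum>i<n. (c i l)\<^sup>2))"
    by (intro sum_mono)
  also have "\<dots> = (1 / real n) * (\<Sum>i<n. \<Sum>l\<in>\<Lambda>. (c i l)\<^sup>2)"
    by (simp add: sum_distrib_left sum.swap[of _ \<Lambda>])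
  also have "\<dots> \<le> (1 / real n) * (\<Sum>i<n. B)"
    using cb n by (intro mult_left_mono sum_mono) auto
  also have "\<dots> = B" using n by simp
  finally show ?thesis .
qed

lemma dist_transfer:
  fixes Y Z :: "'a \<Rightarrow> 'b::topological_space"
  assumes "distr M borel Y = distr M borel Z" "Y \<in> borel_measurable M" "Z \<in> borel_measurable M" "C \<in> sets borel"
  shows "emeasure M {\<omega>\<in>space M. Y \<omega> \<in> C} = emeasure M {\<omega>\<in>space M. Z \<omega> \<in> C}"
proof -
  have "emeasure M {\<omega>\<in>space M. Y \<omega> \<in> C} = emeasure (distr M borel Y) C"
    using assms by (subst emeasure_distr) (auto simp: vimage_def Int_def conj_commute)
  also have "\<dots> = emeasure (distr M borel Z) C" using assms by simp
  also have "\<dots> = emeasure M {\<omega>\<in>space M. Z \<omega> \<in> C}"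
    using assms by (subst emeasure_distr) (auto simp: vimage_def Int_def conj_commute)
  finally show ?thesis .
qed

lemma fst_sets: "A \<in> sets (borel :: real measure) \<Longrightarrow> {p :: real \<times> (real \<times> real). fst p \<in> A} \<in> sets borel"
proof -
  assume A: "A \<in> sets (borel :: real measure)"
  have "fst \<in> borel_measurable (borel :: (real \<times> (real \<times> real)) measure)"
    by (intro borel_measurable_continuous_onI continuous_on_fst continuous_on_id)
  from measurable_sets[OF this A] show ?thesis by (simp add: vimage_def)
qed

lemma snd_sets: "B \<in> sets (borel :: (real \<times> real) measure) \<Longrightarrow> {p :: real \<times> (real \<times> real). snd p \<in> B} \<in> sets borel"
proof -
  assume B: "B \<in> sets (borel :: (real \<times> real) measure)"
  have "snd \<in> borel_measurable (borel :: (real \<times> (real \<times> real)) measure)"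
    by (intro borel_measurable_continuous_onI continuous_on_snd continuous_on_id)
  from measurable_sets[OF this B] show ?thesis by (simp add: vimage_def)
qed

theorem proposition5p5:
  fixes M :: "'a measure" and X L U :: "'a \<Rightarrow> real"
    and Xs Ls Us :: "nat \<Rightarrow> 'a \<Rightarrow> real" and n :: nat
    and f :: "real \<Rightarrow> real" and \<sigma>\<^sub>0 \<Phi>\<^sub>0 :: real
    and \<Lambda> :: "'l set" and \<phi> :: "'l \<Rightarrow> real \<Rightarrow> real"
  assumes "prob_space M"
    and meas: "X \<in> borel_measurable M" "L \<in> borel_measurable M" "U \<in> borel_measurable M"
    and range: "\<forall>\<omega>\<in>space M. X \<omega> \<in> S1 \<and> L \<omega> \<in> S1 \<and> U \<omega> \<in> S1"
    and indepX: "prob_space.indep_set M (sets (vimage_algebra (space M) X borel))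
                 (sets (vimage_algebra (space M) (\<lambda>\<omega>. (L \<omega>, U \<omega>)) (borel :: (real \<times> real) measure)))"
    and LU: "AE \<omega> in M. L \<omega> \<noteq> U \<omega>"
    and dens: "distributed M lborel X (\<lambda>x. ennreal (f x))" and f_nonneg: "\<forall>x. 0 \<le> f x"
    and iid_indep: "prob_space.indep_vars M (\<lambda>_. borel) (\<lambda>i \<omega>. (Xs i \<omega>, Ls i \<omega>, Us i \<omega>)) {..<n}"
    and iid_dist: "\<forall>i<n. distr M borel (\<lambda>\<omega>. (Xs i \<omega>, Ls i \<omega>, Us i \<omega>))
                        = distr M borel (\<lambda>\<omega>. (X \<omega>, L \<omega>, U \<omega>))"
    and psi_L2: "in_L2 (\<lambda>x. f x * cover_prob M L U x)"
    and A: "\<sigma>\<^sub>0 > 0" "\<forall>x\<in>S1. cover_prob M L U x \<ge> \<sigma>\<^sub>0"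
    and fin: "finite \<Lambda>" and dim: "card \<Lambda> \<le> n"
    and basis_meas: "\<forall>l\<in>\<Lambda>. \<phi> l \<in> borel_measurable lborel"
    and basis_L2: "\<forall>l\<in>\<Lambda>. set_integrable lborel S1 (\<lambda>x. (\<phi> l x)\<^sup>2)"
    and orthonormal: "\<forall>l\<in>\<Lambda>. \<forall>k\<in>\<Lambda>.
                  (LINT x:S1|lborel. \<phi> l x * \<phi> k x) = (if l = k then 1 else 0)"
    and Phi0: "\<Phi>\<^sub>0 > 0"
    and sup_bound: "AE x in lborel. x \<in> S1 \<longrightarrow> (\<Sum>l\<in>\<Lambda>. (\<phi> l x)\<^sup>2) \<le> \<Phi>\<^sub>0\<^sup>2 * real (card \<Lambda>)"
  shows "(\<integral>\<^sup>+ \<omega>. L2sq (\<lambda>x. psi_hat n \<Lambda> \<phi> Xs Ls Us \<omega> x - f x * cover_prob M L U x)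
              * indicator {\<omega> \<in> space M. \<exists>x\<in>S1. sigma_hat n Ls Us x \<omega> < \<sigma>\<^sub>0 / 2} \<omega> \<partial>M)
         \<le> (ennreal (real n * \<Phi>\<^sub>0\<^sup>2) + L2sq (\<lambda>x. f x * cover_prob M L U x))
             * ennreal (12 * exp (- 2 * real n * \<sigma>\<^sub>0\<^sup>2 / 36))"
proof -
  interpret P: prob_space M by fact
  define s where "s = \<sigma>\<^sub>0"
  have s0: "0 < s" using A by (simp add: s_def)
  interpret LU: LUsetup M L U
    by unfold_locales (use meas range in auto)
  have sig_eq: "LU.sig x = cover_prob M L U x" for x by (simp add: LU.sig_def cover_prob_def)
  have s1: "s \<le> 1"
  proof -
    have "s \<le> cover_prob M L U 0" using A by (auto simp: s_def S1_def)
    also have "\<dots> \<le> 1" by (simp add: cover_prob_def)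
    finally show ?thesis .
  qed
  define T where "T = (\<lambda>i \<omega>. (Xs i \<omega>, Ls i \<omega>, Us i \<omega>))"
  define T0 where "T0 = (\<lambda>\<omega>. (X \<omega>, L \<omega>, U \<omega>))"
  have indT: "P.indep_vars (\<lambda>_. borel) T {..<n}" using iid_indep by (simp add: T_def)
  have Tm[measurable]: "T i \<in> borel_measurable M" if "i < n" for i
    using indT that unfolding P.indep_vars_def by auto
  have T0m[measurable]: "T0 \<in> borel_measurable M" unfolding T0_def using meas by measurable
  have distT: "\<forall>i<n. distr M borel (T i) = distr M borel T0" using iid_dist by (simp add: T_def T0_def)
  have Xsm[measurable]: "Xs i \<in> borel_measurable M" if "i < n" for i
  proof -
    have c: "(\<lambda>p. fst p) \<in> borel_measurable (borel :: (real \<times> real \<times> real) measure)"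
      by (intro borel_measurable_continuous_onI continuous_intros)
    have "(\<lambda>\<omega>. fst (T i \<omega>)) \<in> borel_measurable M" by (rule measurable_compose[OF Tm[OF that] c])
    thus ?thesis by (simp add: T_def)
  qed
  have Lsm[measurable]: "Ls i \<in> borel_measurable M" if "i < n" for i
  proof -
    have c: "(\<lambda>p. fst (snd p)) \<in> borel_measurable (borel :: (real \<times> real \<times> real) measure)"
      by (intro borel_measurable_continuous_onI continuous_intros)
    have "(\<lambda>\<omega>. fst (snd (T i \<omega>))) \<in> borel_measurable M" by (rule measurable_compose[OF Tm[OF that] c])
    thus ?thesis by (simp add: T_def)
  qed
  have Usm[measurable]: "Us i \<in> borel_measurable M" if "i < n" for i
  proof -
    have c: "(\<lambda>p. snd (snd p)) \<in> borel_measurable (borel :: (real \<times> real \<times> real) measure)"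
      by (intro borel_measurable_continuous_onI continuous_intros)
    have "(\<lambda>\<omega>. snd (snd (T i \<omega>))) \<in> borel_measurable M" by (rule measurable_compose[OF Tm[OF that] c])
    thus ?thesis by (simp add: T_def)
  qed

  define Ec where "Ec = {\<omega> \<in> space M. \<exists>x\<in>S1. sigma_hat n Ls Us x \<omega> < \<sigma>\<^sub>0 / 2}"
  have probEc: "\<exists>Aset\<in>sets M. Ec \<subseteq> Aset \<and> P.prob Aset \<le> 6 * exp (- 2 * real n * \<sigma>\<^sub>0\<^sup>2 / 36)"
  proof (cases "6 < exp (real n * s\<^sup>2 / 18)")
    case False
    have "1 \<le> 6 * exp (- 2 * real n * \<sigma>\<^sub>0\<^sup>2 / 36)"
    proof -
      have "1 = exp (real n * s\<^sup>2 / 18) * exp (- 2 * real n * \<sigma>\<^sub>0\<^sup>2 / 36)"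
        unfolding s_def by (simp add: mult_exp_exp)
      also have "\<dots> \<le> 6 * exp (- 2 * real n * \<sigma>\<^sub>0\<^sup>2 / 36)"
        using False by (intro mult_right_mono) auto
      finally show ?thesis .
    qed
    thus ?thesis by (intro bexI[of _ "space M"]) (auto simp: Ec_def P.prob_space)
  next
    case True
    have npos: "0 < n" using True by (cases n) auto
    define d where "d = s / 10"
    have d0: "0 < d" using s0 by (simp add: d_def)
    have sg: "\<forall>x\<in>S1. s \<le> LU.sig x" using A by (simp add: sig_eq s_def)
    obtain F where finF: "finite F" and cardF: "card F \<le> 2 * nat \<lfloor>2 / d\<rfloor> + 1"
      and FB: "\<forall>B\<in>F. B \<in> sets borel \<and> s - d \<le> P.prob {\<omega>\<in>space M. (L \<omega>, U \<omega>) \<in> B}"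
      and Fcov: "\<forall>x\<in>S1. \<exists>B\<in>F. \<forall>p\<in>B. x \<in> arc (fst p) (snd p)"
      using LU.cover[OF s0 sg d0] by blast
    define B3 where "B3 B = {p :: real \<times> real \<times> real. snd p \<in> B}" for B
    define AB where "AB B = {\<omega>\<in>space M. (\<Sum>i<n. indicator (B3 B) (T i \<omega>)) < real n * s / 2}" for B
    have B3m: "B3 B \<in> sets borel" if "B \<in> F" for B
      unfolding B3_def using FB that snd_sets by auto
    have ABm: "AB B \<in> sets M" if "B \<in> F" for B
    proof -
      have [measurable]: "(\<lambda>\<omega>. \<Sum>i<n. indicator (B3 B) (T i \<omega>) :: real) \<in> borel_measurable M"
        by (rule borel_measurable_sum) (auto intro!: measurable_compose[OF Tm borel_measurable_indicator] B3m that)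
      show ?thesis unfolding AB_def by measurable
    qed
    define bnd where "bnd = (1 - (s - s / 10) / 2) ^ n * exp (ln 2 * (real n * s / 2))"
    have ABp: "P.prob (AB B) \<le> bnd" if "B \<in> F" for B
    proof -
      have "s - s/10 \<le> P.prob {\<omega>\<in>space M. T0 \<omega> \<in> B3 B}"
        using FB that by (simp add: B3_def T0_def d_def)
      from P.chernoff_event[OF indT distT T0m B3m[OF that] this, where c="real n * s / 2"]
      show ?thesis by (simp add: AB_def bnd_def)
    qed
    define Aset where "Aset = (\<Union>B\<in>F. AB B)"
    have Am: "Aset \<in> sets M" unfolding Aset_def using finF ABm by auto
    have sub: "Ec \<subseteq> Aset"
    proof
      fix \<omega> assume "\<omega> \<in> Ec"
      then obtain x where sp: "\<omega> \<in> space M" and x: "x \<in> S1" and lt: "sigma_hat n Ls Us x \<omega> < s / 2"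
        by (auto simp: Ec_def s_def)
      obtain B where B: "B \<in> F" and Bx: "\<forall>p\<in>B. x \<in> arc (fst p) (snd p)" using Fcov x by auto
      have "(\<Sum>i<n. indicator (B3 B) (T i \<omega>)) \<le> (\<Sum>i<n. indicator (arc (Ls i \<omega>) (Us i \<omega>)) x :: real)"
        using Bx by (intro sum_mono) (auto simp: B3_def T_def indicator_def)
      also have "\<dots> = real n * sigma_hat n Ls Us x \<omega>" using npos by (simp add: sigma_hat_def)
      also have "\<dots> < real n * (s / 2)" using lt npos by simp
      finally have "\<omega> \<in> AB B" using sp by (simp add: AB_def)
      thus "\<omega> \<in> Aset" using B by (auto simp: Aset_def)
    qed
    have "P.prob Aset \<le> (\<Sum>B\<in>F. P.prob (AB B))"
      unfolding Aset_def using finF ABm by (intro measure_UNION_le) auto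
    also have "\<dots> \<le> (\<Sum>B\<in>F. bnd)" using ABp by (intro sum_mono) auto
    also have "\<dots> = real (card F) * bnd" by simp
    also have "\<dots> \<le> (2 * real (nat \<lfloor>2 / d\<rfloor>) + 1) * bnd"
    proof (rule mult_right_mono)
      have "real (card F) \<le> real (2 * nat \<lfloor>2 / d\<rfloor> + 1)" using cardF by (simp only: of_nat_le_iff)
      thus "real (card F) \<le> 2 * real (nat \<lfloor>2 / d\<rfloor>) + 1" by simp
      show "0 \<le> bnd" unfolding bnd_def using s1 by (intro mult_nonneg_nonneg zero_le_power) auto
    qed
    also have "\<dots> \<le> 6 * exp (- 2 * real n * s\<^sup>2 / 36)"
      unfolding bnd_def
    proof (rule final_numeric[OF s0 s1 True])
      show "0 \<le> real (nat \<lfloor>2 / d\<rfloor>)" by simp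
      have "real (nat \<lfloor>2 / d\<rfloor>) \<le> 2 / d" using d0 by (simp add: of_nat_nat of_int_floor_le)
      thus "real (nat \<lfloor>2 / d\<rfloor>) \<le> 20 / s" by (simp add: d_def)
    qed
    finally show ?thesis using Am sub by (auto simp: s_def)
  qed
  then obtain Aset where Am: "Aset \<in> sets M" and subA: "Ec \<subseteq> Aset"
    and pA: "P.prob Aset \<le> 6 * exp (- 2 * real n * \<sigma>\<^sub>0\<^sup>2 / 36)" by blast

  define \<psi> where "\<psi> x = f x * cover_prob M L U x" for x
  from sup_bound obtain N where subN0: "{x\<in>space lborel. \<not> (x \<in> S1 \<longrightarrow> (\<Sum>l\<in>\<Lambda>. (\<phi> l x)\<^sup>2) \<le> \<Phi>\<^sub>0\<^sup>2 * real (card \<Lambda>))} \<subseteq> N"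
    and N0: "emeasure lborel N = 0" and Nm0: "N \<in> sets lborel" by (rule AE_E)
  have N: "N \<in> null_sets lborel" using N0 Nm0 by (simp add: null_sets_def)
  have subN: "{x. \<not> (x \<in> S1 \<longrightarrow> (\<Sum>l\<in>\<Lambda>. (\<phi> l x)\<^sup>2) \<le> \<Phi>\<^sub>0\<^sup>2 * real (card \<Lambda>))} \<subseteq> N"
    using subN0 by simp
  have Nm[measurable]: "N \<in> sets borel" using Nm0 by simp
  have PXN: "emeasure M {\<omega>\<in>space M. X \<omega> \<in> N} = 0"
  proof -
    have "emeasure M (X -` N \<inter> space M) = (\<integral>\<^sup>+x. ennreal (f x) * indicator N x \<partial>lborel)"
      by (rule distributed_emeasure[OF dens]) (use Nm in simp)
    also have "\<dots> = 0" by (rule nn_integral_null_set[OF N])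
    also have "X -` N \<inter> space M = {\<omega>\<in>space M. X \<omega> \<in> N}" by auto
    finally show ?thesis .
  qed
  have good_i: "AE \<omega> in M. Xs i \<omega> \<in> S1 \<and> Xs i \<omega> \<notin> N" if i: "i < n" for i
  proof -
    have C: "{p :: real \<times> real \<times> real. fst p \<in> - S1 \<union> N} \<in> sets borel"
      by (intro fst_sets sets.Un borel_comp S1_sets Nm)
    have "emeasure M {\<omega>\<in>space M. T i \<omega> \<in> {p. fst p \<in> - S1 \<union> N}} = emeasure M {\<omega>\<in>space M. T0 \<omega> \<in> {p. fst p \<in> - S1 \<union> N}}"
      using distT i by (intro dist_transfer[OF _ Tm[OF i] T0m C]) auto
    also have "\<dots> = emeasure M {\<omega>\<in>space M. X \<omega> \<in> N}"
      using range by (intro arg_cong[where f="emeasure M"]) (auto simp: T0_def)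
    also have "{\<omega>\<in>space M. T i \<omega> \<in> {p. fst p \<in> - S1 \<union> N}} = {\<omega>\<in>space M. \<not> (Xs i \<omega> \<in> S1 \<and> Xs i \<omega> \<notin> N)}"
      by (auto simp: T_def)
    finally have z: "emeasure M {\<omega>\<in>space M. \<not> (Xs i \<omega> \<in> S1 \<and> Xs i \<omega> \<notin> N)} = 0"
      using PXN by simp
    have [measurable]: "Xs i \<in> borel_measurable M" using Xsm i .
    have zm: "{\<omega>\<in>space M. \<not> (Xs i \<omega> \<in> S1 \<and> Xs i \<omega> \<notin> N)} \<in> sets M" by measurable
    show ?thesis
      by (rule AE_iff_measurable[THEN iffD2, OF zm refl z])
  qed
  have good: "AE \<omega> in M. \<forall>i\<in>{..<n}. Xs i \<omega> \<in> S1 \<and> Xs i \<omega> \<notin> N"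
    by (rule AE_finite_allI) (use good_i in auto)
  define Cst where "Cst = 2 * ennreal (real n * \<Phi>\<^sub>0\<^sup>2) + 2 * L2sq \<psi>"
  have psim: "(\<lambda>x. \<psi> x * indicator S1 x) \<in> borel_measurable lborel"
    using psi_L2 by (simp add: in_L2_def \<psi>_def)
  have bound_omega: "L2sq (\<lambda>x. psi_hat n \<Lambda> \<phi> Xs Ls Us \<omega> x - \<psi> x) \<le> Cst"
    if gw: "\<forall>i\<in>{..<n}. Xs i \<omega> \<in> S1 \<and> Xs i \<omega> \<notin> N" for \<omega>
  proof -
    define a where "a l = (1 / real n) * (\<Sum>i<n. Delta Xs Ls Us i \<omega> * \<phi> l (Xprime Xs Ls Us i \<omega>))" for l
    have ph: "psi_hat n \<Lambda> \<phi> Xs Ls Us \<omega> x = (\<Sum>l\<in>\<Lambda>. a l * \<phi> l x)" for x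
      by (simp add: psi_hat_def a_def)
    have phm: "(\<lambda>x. (\<Sum>l\<in>\<Lambda>. a l * \<phi> l x) * indicator S1 x) \<in> borel_measurable lborel"
      using basis_meas by (intro borel_measurable_times borel_measurable_sum borel_measurable_indicator) (auto simp: S1_def)
    have e1: "L2sq (\<lambda>x. psi_hat n \<Lambda> \<phi> Xs Ls Us \<omega> x - \<psi> x) \<le> 2 * L2sq (\<lambda>x. \<Sum>l\<in>\<Lambda>. a l * \<phi> l x) + 2 * L2sq \<psi>"
      unfolding ph by (rule L2sq_diff_le[OF phm psim])
    have e2: "L2sq (\<lambda>x. \<Sum>l\<in>\<Lambda>. a l * \<phi> l x) = ennreal (\<Sum>l\<in>\<Lambda>. (a l)\<^sup>2)"
      by (rule L2sq_ortho[OF fin basis_meas basis_L2 orthonormal])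
    have cb: "\<forall>i<n. (\<Sum>l\<in>\<Lambda>. (Delta Xs Ls Us i \<omega> * \<phi> l (Xprime Xs Ls Us i \<omega>))\<^sup>2) \<le> \<Phi>\<^sub>0\<^sup>2 * real (card \<Lambda>)"
    proof (intro allI impI)
      fix i assume i: "i < n"
      show "(\<Sum>l\<in>\<Lambda>. (Delta Xs Ls Us i \<omega> * \<phi> l (Xprime Xs Ls Us i \<omega>))\<^sup>2) \<le> \<Phi>\<^sub>0\<^sup>2 * real (card \<Lambda>)"
      proof (cases "Xs i \<omega> \<in> arc (Ls i \<omega>) (Us i \<omega>)")
        case True
        have "Xs i \<omega> \<in> S1" "Xs i \<omega> \<notin> N" using gw i by auto
        hence "(\<Sum>l\<in>\<Lambda>. (\<phi> l (Xs i \<omega>))\<^sup>2) \<le> \<Phi>\<^sub>0\<^sup>2 * real (card \<Lambda>)" using subN by blast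
        thus ?thesis using True by (simp add: Delta_def Xprime_def)
      next
        case False thus ?thesis by (simp add: Delta_def)
      qed
    qed
    have e3: "(\<Sum>l\<in>\<Lambda>. (a l)\<^sup>2) \<le> \<Phi>\<^sub>0\<^sup>2 * real (card \<Lambda>)"
      unfolding a_def by (rule coef_bound[OF fin _ cb]) simp
    have "real (card \<Lambda>) \<le> real n" using dim by simp
    hence "\<Phi>\<^sub>0\<^sup>2 * real (card \<Lambda>) \<le> \<Phi>\<^sub>0\<^sup>2 * real n" by (intro mult_left_mono) auto
    hence "\<Phi>\<^sub>0\<^sup>2 * real (card \<Lambda>) \<le> real n * \<Phi>\<^sub>0\<^sup>2" by (simp add: mult.commute)
    hence e4: "ennreal (\<Sum>l\<in>\<Lambda>. (a l)\<^sup>2) \<le> ennreal (real n * \<Phi>\<^sub>0\<^sup>2)"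
      using e3 by (intro ennreal_leI) linarith
    have "2 * L2sq (\<lambda>x. \<Sum>l\<in>\<Lambda>. a l * \<phi> l x) + 2 * L2sq \<psi> \<le> Cst"
      unfolding Cst_def e2 using e4 by (intro add_right_mono mult_left_mono) auto
    with e1 show ?thesis by (rule order.trans)
  qed
  have "(\<integral>\<^sup>+ \<omega>. L2sq (\<lambda>x. psi_hat n \<Lambda> \<phi> Xs Ls Us \<omega> x - f x * cover_prob M L U x)
              * indicator {\<omega> \<in> space M. \<exists>x\<in>S1. sigma_hat n Ls Us x \<omega> < \<sigma>\<^sub>0 / 2} \<omega> \<partial>M)
      \<le> (\<integral>\<^sup>+ \<omega>. Cst * indicator Aset \<omega> \<partial>M)"
  proof (rule nn_integral_mono_AE)
    have pw: "L2sq (\<lambda>x. psi_hat n \<Lambda> \<phi> Xs Ls Us \<omega> x - f x * cover_prob M L U x)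
              * indicator {\<omega> \<in> space M. \<exists>x\<in>S1. sigma_hat n Ls Us x \<omega> < \<sigma>\<^sub>0 / 2} \<omega> \<le> Cst * indicator Aset \<omega>"
      if gw: "\<forall>i\<in>{..<n}. Xs i \<omega> \<in> S1 \<and> Xs i \<omega> \<notin> N" for \<omega>
    proof (cases "\<omega> \<in> Ec")
      case True
      hence "\<omega> \<in> Aset" using subA by auto
      have "L2sq (\<lambda>x. psi_hat n \<Lambda> \<phi> Xs Ls Us \<omega> x - f x * cover_prob M L U x) \<le> Cst"
        using bound_omega[OF gw] by (simp add: \<psi>_def)
      thus ?thesis using True \<open>\<omega> \<in> Aset\<close> unfolding Ec_def[symmetric] by simp
    next
      case False thus ?thesis unfolding Ec_def[symmetric] by simp
    qed
    show "AE \<omega> in M. L2sq (\<lambda>x. psi_hat n \<Lambda> \<phi> Xs Ls Us \<omega> x - f x * cover_prob M L U x)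
              * indicator {\<omega> \<in> space M. \<exists>x\<in>S1. sigma_hat n Ls Us x \<omega> < \<sigma>\<^sub>0 / 2} \<omega> \<le> Cst * indicator Aset \<omega>"
      using good by (rule AE_mp) (rule AE_I2, rule impI, erule pw)
  qed
  also have "\<dots> = Cst * emeasure M Aset" using Am by (rule nn_integral_cmult_indicator)
  also have "\<dots> \<le> Cst * ennreal (6 * exp (- 2 * real n * \<sigma>\<^sub>0\<^sup>2 / 36))"
    using pA by (intro mult_left_mono) (auto simp: P.emeasure_eq_measure intro: ennreal_leI)
  also have "\<dots> = (ennreal (real n * \<Phi>\<^sub>0\<^sup>2) + L2sq (\<lambda>x. f x * cover_prob M L U x))
             * ennreal (12 * exp (- 2 * real n * \<sigma>\<^sub>0\<^sup>2 / 36))"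
  proof -
    have "12 * exp (- 2 * real n * \<sigma>\<^sub>0\<^sup>2 / 36) = 2 * (6 * exp (- 2 * real n * \<sigma>\<^sub>0\<^sup>2 / 36))" by simp
    hence "ennreal (12 * exp (- 2 * real n * \<sigma>\<^sub>0\<^sup>2 / 36)) = 2 * ennreal (6 * exp (- 2 * real n * \<sigma>\<^sub>0\<^sup>2 / 36))"
      by (simp add: ennreal_mult)
    thus ?thesis unfolding Cst_def \<psi>_def by (simp add: algebra_simps)
  qed
  finally show ?thesis .
qed


end
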